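(* Let $\{q_x,\rho_x\}_{x=1}^N$ be an ensemble of density operators on a finite-dimensional Hilbert space with probabilities $q_x$, and let $K$ be its symmetry operator, i.e. $K$ is Hermitian and there exist $r_x\ge0$, density operators $\sigma_x$ and a POVM $\{M_x\}$ with $K=q_x\rho_x+r_x\sigma_x$ and $r_x\mathrm{tr}[M_x\sigma_x]=0$ for all $x$. Then $$P_{\mathrm{guess}}=\frac1N+R,\qquad R=\frac1N\sum_{x=1}^N\|K-q_x\rho_x\|_1 .$$
   Context: $P_{\mathrm{guess}}=\max_{\{M_x\}}\sum_x q_x\mathrm{tr}[M_x\rho_x]$, the maximum over POVMs (families of positive semidefinite operators summing to the identity). $\|A\|_1=\mathrm{tr}|A|$ is the trace norm. *)

theory Defs
  imports Complex_Main "Jordan_Normal_Form.Schur_Decomposition"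
begin

definition trace :: "complex mat \<Rightarrow> complex" where
  "trace A = (\<Sum>i<dim_row A. A $$ (i,i))"

definition hermitian :: "complex mat \<Rightarrow> bool" where
  "hermitian A \<longleftrightarrow> A = mat_adjoint A"

definition psd :: "nat \<Rightarrow> complex mat \<Rightarrow> bool" where
  "psd n A \<longleftrightarrow> A \<in> carrier_mat n n \<and> hermitian A \<and>
     (\<forall>v \<in> carrier_vec n. 0 \<le> Re (conjugate v \<bullet> (A *\<^sub>v v)))"

definition density :: "nat \<Rightarrow> complex mat \<Rightarrow> bool" where
  "density n \<rho> \<longleftrightarrow> psd n \<rho> \<and> trace \<rho> = 1"

definition povm :: "nat \<Rightarrow> nat \<Rightarrow> (nat \<Rightarrow> complex mat) \<Rightarrow> bool" where
  "povm n N M \<longleftrightarrow> (\<forall>x\<in>{1..N}. psd n (M x)) \<and>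
     (\<forall>i<n. \<forall>j<n. (\<Sum>x\<in>{1..N}. M x $$ (i,j)) = (1\<^sub>m n) $$ (i,j))"

definition abs_mat :: "complex mat \<Rightarrow> complex mat" where
  "abs_mat A = (THE B. psd (dim_col A) B \<and> B * B = mat_adjoint A * A)"

definition trace_norm :: "complex mat \<Rightarrow> real" where
  "trace_norm A = Re (trace (abs_mat A))"

definition P_guess :: "nat \<Rightarrow> nat \<Rightarrow> (nat \<Rightarrow> real) \<Rightarrow> (nat \<Rightarrow> complex mat) \<Rightarrow> real" where
  "P_guess n N q \<rho> = Sup {(\<Sum>x\<in>{1..N}. q x * Re (trace (M x * \<rho> x))) | M. povm n N M}"

end

theory Submission
  imports Defs
begin

definition sf :: "nat \<Rightarrow> (nat\<Rightarrow>nat\<Rightarrow>complex) \<Rightarrow> (nat\<Rightarrow>complex) \<Rightarrow> (nat\<Rightarrow>complex) \<Rightarrow> complex" where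
  "sf n A v w = (\<Sum>i<n. \<Sum>j<n. cnj (v i) * A i j * w j)"
definition herm :: "nat \<Rightarrow> (nat\<Rightarrow>nat\<Rightarrow>complex) \<Rightarrow> bool" where
  "herm n A \<longleftrightarrow> (\<forall>i<n. \<forall>j<n. A i j = cnj (A j i))"
definition psdf :: "nat \<Rightarrow> (nat\<Rightarrow>nat\<Rightarrow>complex) \<Rightarrow> bool" where
  "psdf n A \<longleftrightarrow> herm n A \<and> (\<forall>v. 0 \<le> Re (sf n A v v))"

lemma sf_expand:
  "sf n A (\<lambda>i. v i + t * u i) (\<lambda>i. v i + t * u i) =
   sf n A v v + cnj t * sf n A u v + t * sf n A v u + cnj t * t * sf n A u u"
proof -
  have e: "\<And>i j. cnj (v i + t*u i) * A i j * (v j + t*u j) = cnj(v i)*A i j*v j + cnj t*(cnj(u i)*A i j*v j) + t*(cnj (v i)*A i j*u j) + cnj t*t*(cnj(u i)*A i j*u j)"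
    by (simp add: algebra_simps)
  show ?thesis unfolding sf_def by (simp only: e sum.distrib sum_distrib_left)
qed

lemma sf_herm: assumes H: "herm n A" shows "sf n A w v = cnj (sf n A v w)"
proof -
  have "cnj (sf n A v w) = (\<Sum>i<n. \<Sum>j<n. v i * cnj (A i j) * cnj (w j))"
    unfolding sf_def by (simp add: cnj_sum)
  also have "\<dots> = (\<Sum>j<n. \<Sum>i<n. v i * cnj (A i j) * cnj (w j))" by (rule sum.swap)
  also have "\<dots> = sf n A w v" unfolding sf_def
  proof (intro sum.cong refl)
    fix x y assume "x \<in> {..<n}" "y \<in> {..<n}"
    hence "cnj (A y x) = A x y" using H unfolding herm_def by (metis complex_cnj_cnj lessThan_iff)
    thus "v y * cnj (A y x) * cnj (w x) = cnj (w x) * A x y * v y" by (simp add: mult_ac)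
  qed
  finally show ?thesis by simp
qed

lemma sf_col: "sf n A u v = (\<Sum>i<n. cnj (u i) * (\<Sum>j<n. A i j * v j))"
  unfolding sf_def by (simp add: sum_distrib_left mult.assoc)

lemma real_sq_arg:
  fixes a b :: real
  assumes "0 \<le> a" "0 \<le> b" "\<forall>t. 0 \<le> 2*t*a + t*t*b" shows "a = 0"
proof -
  define x where "x = a/(b+1)"
  have ax: "a = x*(b+1)" using assms unfolding x_def by simp
  have "0 \<le> 2*(-x)*a + (-x)*(-x)*b" using assms(3) by blast
  also have "\<dots> = -(x*x*(b+2))" unfolding ax by (simp add: algebra_simps)
  finally have "x*x*(b+2) \<le> 0" by simp
  moreover have "0 \<le> x*x*(b+2)" using assms by simp
  ultimately have "x*x*(b+2) = 0" by linarith
  hence "x = 0" using assms by simp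
  thus ?thesis using ax by simp
qed

lemma psdf_null:
  assumes P: "psdf n A" and z: "Re (sf n A v v) = 0" and i: "i < n"
  shows "(\<Sum>j<n. A i j * v j) = 0"
proof -
  define u where "u i = (\<Sum>j<n. A i j * v j)" for i
  define a where "a = sf n A u v"
  have H: "herm n A" using P psdf_def by auto
  have a: "a = (\<Sum>i<n. cnj (u i) * u i)" unfolding a_def sf_col u_def ..
  have Rea: "Re a = (\<Sum>i<n. (Re (u i))^2 + (Im (u i))^2)" unfolding a
    by (simp add: sum.distrib power2_eq_square)
  have vu: "sf n A v u = cnj a" unfolding a_def by (rule sf_herm[OF H])
  have "\<forall>t. 0 \<le> 2*t*Re a + t*t*Re (sf n A u u)"
  proof
    fix t :: real
    have "0 \<le> Re (sf n A (\<lambda>i. v i + complex_of_real t * u i) (\<lambda>i. v i + complex_of_real t * u i))"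
      using P psdf_def by blast
    also have "\<dots> = Re (sf n A v v + of_real t * a + of_real t * cnj a + of_real t * of_real t * sf n A u u)"
      unfolding sf_expand vu a_def[symmetric] by simp
    also have "\<dots> = 2*t*Re a + t*t*Re (sf n A u u)" using z by simp
    finally show "0 \<le> 2*t*Re a + t*t*Re (sf n A u u)" .
  qed
  moreover have "0 \<le> Re a" unfolding Rea by (intro sum_nonneg) auto
  moreover have "0 \<le> Re (sf n A u u)" using P psdf_def by blast
  ultimately have "Re a = 0" using real_sq_arg by blast
  hence "\<forall>i\<in>{..<n}. (Re (u i))^2 + (Im (u i))^2 = 0" unfolding Rea
    using sum_nonneg_eq_0_iff[of "{..<n}" "\<lambda>i. (Re (u i))^2 + (Im (u i))^2"] by simp
  hence "Re (u i) = 0" "Im (u i) = 0" using i by auto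
  hence "u i = 0" by (simp add: complex_eq_iff)
  thus ?thesis unfolding u_def .
qed


lemma herm_cnj: "herm n A \<Longrightarrow> i < n \<Longrightarrow> j < n \<Longrightarrow> cnj (A i j) = A j i"
  unfolding herm_def by (metis complex_cnj_cnj)

lemma sq_unique:
  assumes PB: "psdf n B" and PC: "psdf n C"
    and sq: "\<And>i k. i<n \<Longrightarrow> k<n \<Longrightarrow> (\<Sum>j<n. B i j * B j k) = (\<Sum>j<n. C i j * C j k)"
    and i: "i<n" and j: "j<n"
  shows "B i j = C i j"
proof -
  define d where "d i j = B i j - C i j" for i j
  have HB: "herm n B" and HC: "herm n C" using PB PC psdf_def by auto
  have Hd: "herm n d" unfolding herm_def d_def proof (intro allI impI)
    fix i j assume "i<n" "j<n"
    thus "B i j - C i j = cnj (B j i - C j i)" using herm_cnj[OF HB] herm_cnj[OF HC] by simp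
  qed
  have E: "(\<Sum>j<n. B i j * d j k) = - (\<Sum>j<n. d i j * C j k)" if "i<n" "k<n" for i k
  proof -
    have "(\<Sum>j<n. B i j * d j k) + (\<Sum>j<n. d i j * C j k) = (\<Sum>j<n. B i j * B j k) - (\<Sum>j<n. C i j * C j k)"
      unfolding d_def by (simp add: algebra_simps sum_subtractf sum.distrib)
    also have "\<dots> = 0" using sq that by simp
    finally show ?thesis by (simp add: eq_neg_iff_add_eq_0)
  qed
  define SB where "SB k = sf n B (\<lambda>i. d i k) (\<lambda>i. d i k)" for k
  define SC where "SC k = sf n C (\<lambda>i. d i k) (\<lambda>i. d i k)" for k
  have "(\<Sum>k<n. SB k) = (\<Sum>k<n. \<Sum>i<n. cnj (d i k) * (\<Sum>j<n. B i j * d j k))"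
    unfolding SB_def sf_col ..
  also have "\<dots> = (\<Sum>k<n. \<Sum>i<n. - (\<Sum>j<n. d k i * d i j * C j k))"
  proof (intro sum.cong refl)
    fix k i assume "k \<in> {..<n}" "i \<in> {..<n}"
    thus "cnj (d i k) * (\<Sum>j<n. B i j * d j k) = - (\<Sum>j<n. d k i * d i j * C j k)"
      using E herm_cnj[OF Hd] by (simp add: sum_distrib_left mult.assoc)
  qed
  also have "\<dots> = - (\<Sum>k<n. \<Sum>i<n. \<Sum>j<n. d k i * d i j * C j k)"
    by (simp add: sum_negf)
  finally have sB: "(\<Sum>k<n. SB k) = - (\<Sum>k<n. \<Sum>i<n. \<Sum>j<n. d k i * d i j * C j k)" .
  have "cnj (\<Sum>k<n. SC k) = (\<Sum>k<n. \<Sum>i<n. \<Sum>j<n. cnj (cnj (d i k) * C i j * d j k))"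
    unfolding SC_def sf_def by (simp only: cnj_sum)
  also have "\<dots> = (\<Sum>k<n. \<Sum>i<n. \<Sum>j<n. d i k * C j i * d k j)"
  proof (intro sum.cong refl)
    fix k i j assume "k \<in> {..<n}" "i \<in> {..<n}" "j \<in> {..<n}"
    thus "cnj (cnj (d i k) * C i j * d j k) = d i k * C j i * d k j"
      using herm_cnj[OF HC] herm_cnj[OF Hd] by simp
  qed
  also have "\<dots> = (\<Sum>i<n. \<Sum>k<n. \<Sum>j<n. d i k * C j i * d k j)" by (rule sum.swap)
  also have "\<dots> = (\<Sum>k<n. \<Sum>i<n. \<Sum>j<n. d k i * d i j * C j k)"
    by (simp add: mult_ac)
  finally have sC: "cnj (\<Sum>k<n. SC k) = (\<Sum>k<n. \<Sum>i<n. \<Sum>j<n. d k i * d i j * C j k)" .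
  have "(\<Sum>k<n. Re (SB k)) + (\<Sum>k<n. Re (SC k)) = 0"
  proof -
    have "(\<Sum>k<n. Re (SB k)) = Re (\<Sum>k<n. SB k)" by simp
    also have "\<dots> = - Re (cnj (\<Sum>k<n. SC k))" using sB sC by simp
    also have "\<dots> = - (\<Sum>k<n. Re (SC k))" by simp
    finally show ?thesis by simp
  qed
  moreover have nb: "\<forall>k. 0 \<le> Re (SB k)" and nc: "\<forall>k. 0 \<le> Re (SC k)"
    using PB PC unfolding psdf_def SB_def SC_def by auto
  ultimately have "(\<Sum>k<n. Re (SB k)) = 0" "(\<Sum>k<n. Re (SC k)) = 0"
    using sum_nonneg[of "{..<n}" "\<lambda>k. Re (SB k)"] sum_nonneg[of "{..<n}" "\<lambda>k. Re (SC k)"] by auto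
  hence zB: "Re (SB k) = 0" and zC: "Re (SC k) = 0" if "k<n" for k
    using that nb nc sum_nonneg_eq_0_iff[of "{..<n}" "\<lambda>k. Re (SB k)"] sum_nonneg_eq_0_iff[of "{..<n}" "\<lambda>k. Re (SC k)"]
    by auto
  have dd: "(\<Sum>j<n. d i j * d j k) = 0" if "i<n" "k<n" for i k
  proof -
    have b: "Re (sf n B (\<lambda>i. d i k) (\<lambda>i. d i k)) = 0" using zB[OF that(2)] unfolding SB_def .
    have c: "Re (sf n C (\<lambda>i. d i k) (\<lambda>i. d i k)) = 0" using zC[OF that(2)] unfolding SC_def .
    have "(\<Sum>j<n. B i j * d j k) = 0" using psdf_null[OF PB b that(1)] .
    moreover have "(\<Sum>j<n. C i j * d j k) = 0" using psdf_null[OF PC c that(1)] .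
    ultimately have "(\<Sum>j<n. B i j * d j k) - (\<Sum>j<n. C i j * d j k) = 0" by simp
    thus ?thesis unfolding d_def by (simp add: sum_subtractf[symmetric] left_diff_distrib)
  qed
  have "(\<Sum>j\<in>{..<n}. (Re (d i j))^2 + (Im (d i j))^2) = Re (\<Sum>j<n. d i j * d j i)"
  proof -
    have "(\<Sum>j<n. d i j * d j i) = (\<Sum>j<n. d i j * cnj (d i j))"
      using herm_cnj[OF Hd] i by (intro sum.cong refl) auto
    thus ?thesis by (simp add: power2_eq_square)
  qed
  also have "\<dots> = 0" using dd[OF i i] by simp
  finally have "\<forall>j\<in>{..<n}. (Re (d i j))^2 + (Im (d i j))^2 = 0"
    using sum_nonneg_eq_0_iff[of "{..<n}" "\<lambda>j. (Re (d i j))^2 + (Im (d i j))^2"] by simp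
  hence "Re (d i j) = 0" "Im (d i j) = 0" using j by auto
  hence "d i j = 0" by (simp add: complex_eq_iff)
  thus ?thesis unfolding d_def by simp
qed


lemma sum_ind0: "(m::nat)<n \<Longrightarrow> (\<Sum>j<n. if j = m then c else 0) = (c :: complex)"
  by simp

lemma sum_ind: "(m::nat)<n \<Longrightarrow> (\<Sum>j<n. f j * (if j = m then 1 else 0)) = (f m :: complex)"
proof -
  assume "m<n"
  have "(\<Sum>j<n. f j * (if j = m then 1 else 0)) = (\<Sum>j<n. if j = m then f m else 0)"
    by (intro sum.cong refl) auto
  thus ?thesis using \<open>m<n\<close> by simp
qed

lemma sf_e: assumes "(m::nat) < n" shows "sf n A (\<lambda>j. if j = m then 1 else 0) v = (\<Sum>j<n. A m j * v j)"
proof -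
  have "sf n A (\<lambda>j. if j = m then 1 else 0) v = (\<Sum>i<n. if i = m then (\<Sum>j<n. A m j * v j) else 0)"
    unfolding sf_col by (intro sum.cong refl) auto
  thus ?thesis using assms by simp
qed

lemma sf_e2: assumes "(m::nat) < n" shows "sf n A v (\<lambda>j. if j = m then 1 else 0) = (\<Sum>i<n. cnj (v i) * A i m)"
  unfolding sf_col using assms by (simp add: sum_ind)

lemma tr_nonneg_aux:
  assumes "d = n - m" and P: "psdf n P" and S: "psdf n S"
    and supp: "\<And>i j. i<n \<Longrightarrow> j<n \<Longrightarrow> i<m \<or> j<m \<Longrightarrow> S i j = 0"
  shows "0 \<le> Re (\<Sum>i<n. \<Sum>k<n. P i k * S k i)"
  using assms
proof (induction d arbitrary: m S)
  case 0
  hence "\<And>i k. i<n \<Longrightarrow> k<n \<Longrightarrow> S k i = 0" by auto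
  thus ?case by simp
next
  case (Suc d)
  hence mn: "m < n" by simp
  have HS: "herm n S" using Suc.prems psdf_def by auto
  define e where "e = (\<lambda>j::nat. if j = m then (1::complex) else 0)"
  define s where "s = S m m"
  have see: "sf n S e e = s" unfolding e_def s_def using mn by (simp add: sf_e sum_ind)
  have s_real: "cnj s = s" unfolding s_def using herm_cnj[OF HS mn mn] .
  have s_nonneg: "0 \<le> Re s" using Suc.prems(3) see unfolding psdf_def by metis
  show ?case
  proof (cases "s = 0")
    case True
    have col: "S i m = 0" if "i<n" for i
    proof -
      have "Re (sf n S e e) = 0" using see True by simp
      from psdf_null[OF Suc.prems(3) this that] show ?thesis unfolding e_def using sum_ind mn by simp
    qed
    have supp': "S i j = 0" if that: "i<n" "j<n" and h: "i < Suc m \<or> j < Suc m" for i j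
    proof -
      consider "i < m \<or> j < m" | "i = m" | "j = m" using h by linarith
      thus ?thesis
      proof cases
        case 1 thus ?thesis using Suc.prems(4) that by blast
      next
        case 2 thus ?thesis using col[OF that(2)] herm_cnj[OF HS that(2) mn] by simp
      next
        case 3 thus ?thesis using col[OF that(1)] by simp
      qed
    qed
    show ?thesis using Suc.IH[of "Suc m" S] Suc.prems supp' by simp
  next
    case False
    have spos: "0 < Re s" using False s_nonneg s_real
      by (metis complex_cnj_complex_of_real complex_eq_iff complex_of_real_def less_eq_real_def zero_complex.sel(1) zero_complex.sel(2) Im_complex_of_real Re_complex_of_real cnj.sel(2) neg_equal_zero)
    define S' where "S' i j = S i j - S i m * S m j / s" for i j
    have HS': "herm n S'" unfolding herm_def
    proof (intro allI impI)
      fix i j assume ij: "i<n" "j<n"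
      show "S' i j = cnj (S' j i)" unfolding S'_def
        using herm_cnj[OF HS ij(2) ij(1)] herm_cnj[OF HS ij(2) mn] herm_cnj[OF HS mn ij(1)] s_real
        by (simp add: mult.commute)
    qed
    have PS': "0 \<le> Re (sf n S' v v)" for v
    proof -
      define a where "a = (\<Sum>j<n. S m j * v j)"
      define t where "t = - a / s"
      have ev: "sf n S e v = a" unfolding e_def a_def using sf_e mn by simp
      have ve: "sf n S v e = cnj a" using sf_herm[OF HS, of v e] ev by simp
      have "sf n S (\<lambda>i. v i + t * e i) (\<lambda>i. v i + t * e i) = sf n S v v - a * cnj a / s"
        unfolding sf_expand ev ve see t_def using False s_real by (simp add: field_simps)
      moreover have "sf n S' v v = sf n S v v - a * cnj a / s"
      proof -
        have "sf n S' v v = sf n S v v - (\<Sum>i<n. \<Sum>j<n. cnj (v i) * S i m * (S m j * v j) / s)"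
          unfolding sf_def S'_def by (simp add: sum_subtractf[symmetric] algebra_simps)
        also have "(\<Sum>i<n. \<Sum>j<n. cnj (v i) * S i m * (S m j * v j) / s) = (\<Sum>i<n. cnj (v i) * S i m) * a / s"
          unfolding a_def apply (simp add: sum_distrib_left sum_distrib_right sum_divide_distrib)
          by (rule sum.swap)
        also have "(\<Sum>i<n. cnj (v i) * S i m) = cnj a" using sf_e2[OF mn, of S v] ve unfolding e_def by simp
        finally show ?thesis by (simp add: mult.commute)
      qed
      ultimately show ?thesis using Suc.prems(3) unfolding psdf_def by metis
    qed
    have PsS': "psdf n S'" using HS' PS' psdf_def by auto
    have supp': "S' i j = 0" if that: "i<n" "j<n" and h: "i < Suc m \<or> j < Suc m" for i j
    proof -
      consider "i < m" | "j < m" | "i = m" | "j = m" using h by linarith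
      thus ?thesis
      proof cases
        case 1 thus ?thesis unfolding S'_def using Suc.prems(4) that mn by simp
      next
        case 2 thus ?thesis unfolding S'_def using Suc.prems(4) that mn by simp
      next
        case 3 thus ?thesis unfolding S'_def s_def using False s_def by simp
      next
        case 4 thus ?thesis unfolding S'_def s_def using False s_def by simp
      qed
    qed
    have IH: "0 \<le> Re (\<Sum>i<n. \<Sum>k<n. P i k * S' k i)"
      using Suc.IH[of "Suc m" S'] Suc.prems PsS' supp' by simp
    define c where "c k = S k m" for k
    have "(\<Sum>i<n. \<Sum>k<n. P i k * S k i) = (\<Sum>i<n. \<Sum>k<n. P i k * S' k i) + (\<Sum>i<n. \<Sum>k<n. P i k * (S k m * S m i / s))"
      unfolding S'_def by (simp add: right_diff_distrib sum_subtractf)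
    also have "(\<Sum>i<n. \<Sum>k<n. P i k * (S k m * S m i / s)) = sf n P c c / s"
      unfolding sf_def c_def sum_divide_distrib
    proof (intro sum.cong refl)
      fix i k assume "i \<in> {..<n}" "k \<in> {..<n}"
      thus "P i k * (S k m * S m i / s) = cnj (S i m) * P i k * S k m / s"
        using herm_cnj[OF HS _ mn, of i] by simp
    qed
    finally have eq: "(\<Sum>i<n. \<Sum>k<n. P i k * S k i) = (\<Sum>i<n. \<Sum>k<n. P i k * S' k i) + sf n P c c / s" .
    have "Im s = 0" using s_real by (simp add: complex_eq_iff)
    hence "Re (sf n P c c / s) = Re (sf n P c c) / Re s" by (simp add: Re_divide power2_eq_square)
    moreover have "0 \<le> Re (sf n P c c)" using P psdf_def by blast
    ultimately have "0 \<le> Re (sf n P c c / s)" using spos by simp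
    thus ?thesis unfolding eq using IH by simp
  qed
qed


lemma tr_nonneg:
  assumes "psdf n P" "psdf n S" shows "0 \<le> Re (\<Sum>i<n. \<Sum>k<n. P i k * S k i)"
  using tr_nonneg_aux[of n n 0 P S] assms by simp

lemma mult_entry: "A \<in> carrier_mat n n \<Longrightarrow> B \<in> carrier_mat n n \<Longrightarrow> i<n \<Longrightarrow> k<n \<Longrightarrow>
  (A*B)$$(i,k) = (\<Sum>j<n. A$$(i,j) * B$$(j,k))"
  by (simp add: scalar_prod_def atLeast0LessThan)

lemma trace_mult: "A \<in> carrier_mat n n \<Longrightarrow> B \<in> carrier_mat n n \<Longrightarrow>
  trace (A*B) = (\<Sum>i<n. \<Sum>k<n. A$$(i,k) * B$$(k,i))"
proof -
  assume A: "A \<in> carrier_mat n n" and B: "B \<in> carrier_mat n n"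
  have "trace (A*B) = (\<Sum>i<n. (A*B)$$(i,i))" unfolding trace_def using A by simp
  also have "\<dots> = (\<Sum>i<n. \<Sum>k<n. A$$(i,k) * B$$(k,i))"
    by (intro sum.cong refl) (use mult_entry[OF A B] in auto)
  finally show ?thesis .
qed

lemma adjoint_entry: "A \<in> carrier_mat n n \<Longrightarrow> i<n \<Longrightarrow> j<n \<Longrightarrow> (mat_adjoint A) $$ (i,j) = cnj (A $$ (j,i))"
  by (simp add: mat_adjoint_def mat_of_rows_def)

lemma adjoint_carrier: "A \<in> carrier_mat n n \<Longrightarrow> mat_adjoint A \<in> carrier_mat n n"
  by (simp add: mat_adjoint_def mat_of_rows_def)

lemma quad_form: "A \<in> carrier_mat n n \<Longrightarrow>
  conjugate (vec n v) \<bullet> (A *\<^sub>v vec n v) = sf n (\<lambda>i j. A$$(i,j)) v v"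
  unfolding sf_col by (simp add: scalar_prod_def atLeast0LessThan)

lemma psd_psdf: assumes "psd n A" shows "psdf n (\<lambda>i j. A$$(i,j))"
proof -
  have A: "A \<in> carrier_mat n n" and h: "A = mat_adjoint A"
    and q: "\<forall>v \<in> carrier_vec n. 0 \<le> Re (conjugate v \<bullet> (A *\<^sub>v v))"
    using assms unfolding psd_def hermitian_def by blast+
  have "herm n (\<lambda>i j. A$$(i,j))" unfolding herm_def
  proof (intro allI impI)
    fix i j assume "i<n" "j<n"
    have "A $$ (i,j) = (mat_adjoint A) $$ (i,j)" using h by (rule arg_cong)
    also have "\<dots> = cnj (A $$ (j,i))" using adjoint_entry[OF A] \<open>i<n\<close> \<open>j<n\<close> by blast
    finally show "A $$ (i,j) = cnj (A $$ (j,i))" .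
  qed
  moreover have "0 \<le> Re (sf n (\<lambda>i j. A$$(i,j)) v v)" for v
    using q[rule_format, of "vec n v"] quad_form[OF A] by simp
  ultimately show ?thesis unfolding psdf_def by auto
qed

lemma psdf_psd: assumes A: "A \<in> carrier_mat n n" and P: "psdf n (\<lambda>i j. A$$(i,j))" shows "psd n A"
proof -
  have "A = mat_adjoint A"
  proof (rule eq_matI)
    fix i j assume "i < dim_row (mat_adjoint A)" "j < dim_col (mat_adjoint A)"
    hence ij: "i<n" "j<n" using adjoint_carrier[OF A] by auto
    have "herm n (\<lambda>i j. A$$(i,j))" using P psdf_def by auto
    hence "cnj (A $$ (j,i)) = A $$ (i,j)" using herm_cnj[of n "\<lambda>i j. A$$(i,j)" j i] ij by simp
    thus "A $$ (i,j) = mat_adjoint A $$ (i,j)" using adjoint_entry[OF A ij] by simp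
  qed (use adjoint_carrier[OF A] A in auto)
  moreover have "0 \<le> Re (conjugate v \<bullet> (A *\<^sub>v v))" if "v \<in> carrier_vec n" for v
  proof -
    have "v = vec n (\<lambda>i. v$i)" using that by auto
    thus ?thesis using quad_form[OF A, of "\<lambda>i. v$i"] P unfolding psdf_def by metis
  qed
  ultimately show ?thesis unfolding psd_def hermitian_def using A by blast
qed

lemma psd_unique: assumes "psd n A" "psd n B" "B * B = A * A" shows "B = A"
proof -
  have A: "A \<in> carrier_mat n n" and B: "B \<in> carrier_mat n n" using assms unfolding psd_def by blast+
  show ?thesis
  proof (rule eq_matI)
    fix i j assume "i < dim_row A" "j < dim_col A"
    hence ij: "i<n" "j<n" using A by auto
    show "B $$ (i,j) = A $$ (i,j)"
    proof (rule sq_unique[OF psd_psdf[OF assms(2)] psd_psdf[OF assms(1)] _ ij])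
      fix i k assume "i<n" "k<n"
      thus "(\<Sum>j<n. B $$ (i, j) * B $$ (j, k)) = (\<Sum>j<n. A $$ (i, j) * A $$ (j, k))"
        using assms(3) mult_entry[OF A A] mult_entry[OF B B] by metis
    qed
  qed (use A B in auto)
qed

lemma abs_mat_psd: assumes "psd n A" shows "abs_mat A = A"
proof -
  have A: "A \<in> carrier_mat n n" and h: "mat_adjoint A = A" using assms unfolding psd_def hermitian_def by metis+
  show ?thesis unfolding abs_mat_def
  proof (rule the_equality)
    have "dim_col A = n" using A by simp
    thus "psd (dim_col A) A \<and> A * A = mat_adjoint A * A" using assms h by simp
  next
    fix B assume "psd (dim_col A) B \<and> B * B = mat_adjoint A * A"
    moreover have "dim_col A = n" using A by simp
    ultimately show "B = A" using psd_unique[OF assms] h by simp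
  qed
qed

lemma psdf_scale: assumes P: "psdf n A" and c: "0 \<le> c" shows "psdf n (\<lambda>i j. complex_of_real c * A i j)"
proof -
  have H: "herm n A" using P psdf_def by auto
  have "herm n (\<lambda>i j. complex_of_real c * A i j)" unfolding herm_def
  proof (intro allI impI)
    fix i j assume ij: "i<n" "j<n"
    have "cnj (A j i) = A i j" using herm_cnj[OF H ij(2) ij(1)] .
    thus "complex_of_real c * A i j = cnj (complex_of_real c * A j i)" by simp
  qed
  moreover have "0 \<le> Re (sf n (\<lambda>i j. complex_of_real c * A i j) v v)" for v
  proof -
    have "sf n (\<lambda>i j. complex_of_real c * A i j) v v = complex_of_real c * sf n A v v"
      unfolding sf_def by (simp add: sum_distrib_left mult_ac)
    thus ?thesis using P c unfolding psdf_def by simp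
  qed
  ultimately show ?thesis unfolding psdf_def by blast
qed

lemma psdf_cong: assumes "psdf n A" "\<And>i j. i<n \<Longrightarrow> j<n \<Longrightarrow> A i j = B i j" shows "psdf n B"
proof -
  have "sf n B v v = sf n A v v" for v unfolding sf_def using assms(2) by (intro sum.cong refl) auto
  moreover have "herm n B" unfolding herm_def
  proof (intro allI impI)
    fix i j assume ij: "i<n" "j<n"
    have "herm n A" using assms(1) psdf_def by auto
    hence "A i j = cnj (A j i)" using ij unfolding herm_def by blast
    thus "B i j = cnj (B j i)" using assms(2)[OF ij] assms(2)[OF ij(2) ij(1)] by simp
  qed
  ultimately show ?thesis using assms(1) unfolding psdf_def by auto
qed

theorem proposition2:
  fixes n N :: nat and q r :: "nat \<Rightarrow> real" and \<rho> \<sigma> M :: "nat \<Rightarrow> complex mat"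
    and K :: "complex mat"
  assumes q_nonneg: "\<forall>x\<in>{1..N}. 0 \<le> q x"
    and q_sum: "(\<Sum>x\<in>{1..N}. q x) = 1"
    and rho: "\<forall>x\<in>{1..N}. density n (\<rho> x)"
    and K_herm: "K \<in> carrier_mat n n" "hermitian K"
    and r_nonneg: "\<forall>x\<in>{1..N}. 0 \<le> r x"
    and sigma: "\<forall>x\<in>{1..N}. density n (\<sigma> x)"
    and M: "povm n N M"
    and K_decomp: "\<forall>x\<in>{1..N}. K = complex_of_real (q x) \<cdot>\<^sub>m \<rho> x + complex_of_real (r x) \<cdot>\<^sub>m \<sigma> x"
    and compl: "\<forall>x\<in>{1..N}. complex_of_real (r x) * trace (M x * \<sigma> x) = 0"
  shows "P_guess n N q \<rho> = 1 / real N + (1 / real N) * (\<Sum>x\<in>{1..N}. trace_norm (K - complex_of_real (q x) \<cdot>\<^sub>m \<rho> x))"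
proof -
  have N1: "N \<ge> 1"
  proof (rule ccontr)
    assume "\<not> N \<ge> 1" hence "N = 0" by simp
    thus False using q_sum by simp
  qed
  have Kc: "K \<in> carrier_mat n n" by fact
  have rc: "\<rho> x \<in> carrier_mat n n" "psd n (\<rho> x)" "trace (\<rho> x) = 1" if "x \<in> {1..N}" for x
  proof -
    have "psd n (\<rho> x)" "trace (\<rho> x) = 1" using rho that unfolding density_def by auto
    thus "\<rho> x \<in> carrier_mat n n" "psd n (\<rho> x)" "trace (\<rho> x) = 1" unfolding psd_def by blast+
  qed
  have sc: "\<sigma> x \<in> carrier_mat n n" "psd n (\<sigma> x)" "trace (\<sigma> x) = 1" if "x \<in> {1..N}" for x
  proof -
    have "psd n (\<sigma> x)" "trace (\<sigma> x) = 1" using sigma that unfolding density_def by auto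
    thus "\<sigma> x \<in> carrier_mat n n" "psd n (\<sigma> x)" "trace (\<sigma> x) = 1" unfolding psd_def by blast+
  qed
  have Kent: "K $$ (i,j) = complex_of_real (q x) * \<rho> x $$ (i,j) + complex_of_real (r x) * \<sigma> x $$ (i,j)"
    if x: "x \<in> {1..N}" and ij: "i<n" "j<n" for x i j
  proof -
    have KX: "K = complex_of_real (q x) \<cdot>\<^sub>m \<rho> x + complex_of_real (r x) \<cdot>\<^sub>m \<sigma> x"
      using K_decomp x by blast
    have "K $$ (i,j) = (complex_of_real (q x) \<cdot>\<^sub>m \<rho> x + complex_of_real (r x) \<cdot>\<^sub>m \<sigma> x) $$ (i,j)"
      by (rule arg_cong[OF KX])
    thus ?thesis using rc(1)[OF x] sc(1)[OF x] ij by simp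
  qed
  have diff: "K - complex_of_real (q x) \<cdot>\<^sub>m \<rho> x = complex_of_real (r x) \<cdot>\<^sub>m \<sigma> x" if x: "x \<in> {1..N}" for x
    by (rule eq_matI) (use rc(1)[OF x] sc(1)[OF x] Kc Kent[OF x] in auto)
  have tn: "trace_norm (K - complex_of_real (q x) \<cdot>\<^sub>m \<rho> x) = r x" if x: "x \<in> {1..N}" for x
  proof -
    let ?S = "complex_of_real (r x) \<cdot>\<^sub>m \<sigma> x"
    have Sc: "?S \<in> carrier_mat n n" using sc(1)[OF x] by simp
    have "psdf n (\<lambda>i j. complex_of_real (r x) * \<sigma> x $$ (i,j))"
      using psdf_scale[OF psd_psdf[OF sc(2)[OF x]]] r_nonneg x by simp
    hence "psdf n (\<lambda>i j. ?S $$ (i,j))"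
      by (rule psdf_cong) (use sc(1)[OF x] in simp)
    hence "psd n ?S" using psdf_psd[OF Sc] by simp
    hence "abs_mat ?S = ?S" by (rule abs_mat_psd)
    moreover have "trace ?S = complex_of_real (r x) * trace (\<sigma> x)"
      unfolding trace_def using sc(1)[OF x] by (simp add: sum_distrib_left)
    ultimately show ?thesis unfolding trace_norm_def diff[OF x] using sc(3)[OF x] by simp
  qed
  define tK where "tK = Re (trace K)"
  have trK: "tK = q x + r x" if x: "x \<in> {1..N}" for x
  proof -
    have "trace K = (\<Sum>i<n. complex_of_real (q x) * \<rho> x $$ (i,i) + complex_of_real (r x) * \<sigma> x $$ (i,i))"
      unfolding trace_def using Kc Kent[OF x] by simp
    also have "\<dots> = complex_of_real (q x) * trace (\<rho> x) + complex_of_real (r x) * trace (\<sigma> x)"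
      unfolding trace_def using rc(1)[OF x] sc(1)[OF x] by (simp add: sum.distrib sum_distrib_left)
    finally show ?thesis unfolding tK_def using rc(3)[OF x] sc(3)[OF x] by simp
  qed
  have RHS: "1 / real N + (1 / real N) * (\<Sum>x\<in>{1..N}. trace_norm (K - complex_of_real (q x) \<cdot>\<^sub>m \<rho> x)) = tK"
  proof -
    have "(\<Sum>x\<in>{1..N}. trace_norm (K - complex_of_real (q x) \<cdot>\<^sub>m \<rho> x)) = (\<Sum>x\<in>{1..N}. r x)"
      using tn by simp
    moreover have "(\<Sum>x\<in>{1..N}. tK) = (\<Sum>x\<in>{1..N}. q x + r x)" using trK by simp
    hence "real N * tK = 1 + (\<Sum>x\<in>{1..N}. r x)" using q_sum by (simp add: sum.distrib)
    ultimately show ?thesis using N1 by (simp add: field_simps)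
  qed
  have povm_sum: "(\<Sum>x\<in>{1..N}. trace (M' x * K)) = trace K" if PM: "povm n N M'" for M'
  proof -
    have Mc: "M' x \<in> carrier_mat n n" if "x \<in> {1..N}" for x
    proof -
      have "psd n (M' x)" using PM that unfolding povm_def by auto
      thus ?thesis unfolding psd_def by blast
    qed
    have id: "(\<Sum>x\<in>{1..N}. M' x $$ (i,k)) = (if i = k then 1 else 0)" if "i<n" "k<n" for i k
      using PM that unfolding povm_def by simp
    have "(\<Sum>x\<in>{1..N}. trace (M' x * K)) = (\<Sum>x\<in>{1..N}. \<Sum>i<n. \<Sum>k<n. M' x $$ (i,k) * K $$ (k,i))"
      using trace_mult[OF Mc Kc] by simp
    also have "\<dots> = (\<Sum>i<n. \<Sum>x\<in>{1..N}. \<Sum>k<n. M' x $$ (i,k) * K $$ (k,i))"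
      by (rule sum.swap)
    also have "\<dots> = (\<Sum>i<n. \<Sum>k<n. \<Sum>x\<in>{1..N}. M' x $$ (i,k) * K $$ (k,i))"
      by (rule sum.cong[OF refl]) (rule sum.swap)
    also have "\<dots> = (\<Sum>i<n. \<Sum>k<n. (if i = k then K $$ (k,i) else 0))"
    proof (intro sum.cong refl)
      fix i k assume "i \<in> {..<n}" "k \<in> {..<n}"
      hence "(\<Sum>x\<in>{1..N}. M' x $$ (i,k) * K $$ (k,i)) = (if i = k then 1 else 0) * K $$ (k,i)"
        using id by (simp add: sum_distrib_right[symmetric])
      thus "(\<Sum>x\<in>{1..N}. M' x $$ (i,k) * K $$ (k,i)) = (if i = k then K $$ (k,i) else 0)" by simp
    qed
    also have "\<dots> = trace K" unfolding trace_def using Kc by simp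
    finally show ?thesis .
  qed
  have split: "Re (trace (M' x * K)) = q x * Re (trace (M' x * \<rho> x)) + r x * Re (trace (M' x * \<sigma> x))"
    if Mc: "M' x \<in> carrier_mat n n" and x: "x \<in> {1..N}" for M' x
  proof -
    have "trace (M' x * K) = (\<Sum>i<n. \<Sum>k<n. M' x $$ (i,k) * (complex_of_real (q x) * \<rho> x $$ (k,i) + complex_of_real (r x) * \<sigma> x $$ (k,i)))"
      using trace_mult[OF Mc Kc] Kent[OF x] by simp
    also have "\<dots> = complex_of_real (q x) * trace (M' x * \<rho> x) + complex_of_real (r x) * trace (M' x * \<sigma> x)"
      unfolding trace_mult[OF Mc rc(1)[OF x]] trace_mult[OF Mc sc(1)[OF x]]
      by (simp add: algebra_simps sum.distrib sum_distrib_left)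
    finally show ?thesis by simp
  qed
  have upper: "(\<Sum>x\<in>{1..N}. q x * Re (trace (M' x * \<rho> x))) \<le> tK" if PM: "povm n N M'" for M'
  proof -
    have "q x * Re (trace (M' x * \<rho> x)) \<le> Re (trace (M' x * K))" if x: "x \<in> {1..N}" for x
    proof -
      have P: "psd n (M' x)" using PM x unfolding povm_def by auto
      hence Mc: "M' x \<in> carrier_mat n n" unfolding psd_def by blast
      have "0 \<le> Re (trace (M' x * \<sigma> x))"
        unfolding trace_mult[OF Mc sc(1)[OF x]] using tr_nonneg[OF psd_psdf[OF P] psd_psdf[OF sc(2)[OF x]]] .
      thus ?thesis using split[of M' x, OF Mc x] r_nonneg x by simp
    qed
    hence "(\<Sum>x\<in>{1..N}. q x * Re (trace (M' x * \<rho> x))) \<le> (\<Sum>x\<in>{1..N}. Re (trace (M' x * K)))"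
      by (rule sum_mono)
    also have "\<dots> = tK" unfolding tK_def using povm_sum[OF PM] by (simp flip: Re_sum)
    finally show ?thesis .
  qed
  have attained: "(\<Sum>x\<in>{1..N}. q x * Re (trace (M x * \<rho> x))) = tK"
  proof -
    have "q x * Re (trace (M x * \<rho> x)) = Re (trace (M x * K))" if x: "x \<in> {1..N}" for x
    proof -
      have "psd n (M x)" using M x unfolding povm_def by auto
      hence Mc: "M x \<in> carrier_mat n n" unfolding psd_def by blast
      have "r x * Re (trace (M x * \<sigma> x)) = 0"
        using arg_cong[OF compl[rule_format, OF x], of Re] by simp
      thus ?thesis using split[of M x, OF Mc x] by simp
    qed
    hence "(\<Sum>x\<in>{1..N}. q x * Re (trace (M x * \<rho> x))) = (\<Sum>x\<in>{1..N}. Re (trace (M x * K)))"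
      by (rule sum.cong[OF refl])
    also have "\<dots> = tK" unfolding tK_def using povm_sum[OF M] by (simp flip: Re_sum)
    finally show ?thesis .
  qed
  have "P_guess n N q \<rho> = tK" unfolding P_guess_def
  proof (rule cSup_eq_maximum)
    show "tK \<in> {\<Sum>x\<in>{1..N}. q x * Re (trace (M x * \<rho> x)) |M. povm n N M}"
      using attained M by force
  next
    fix y assume "y \<in> {\<Sum>x\<in>{1..N}. q x * Re (trace (M x * \<rho> x)) |M. povm n N M}"
    thus "y \<le> tK" using upper by blast
  qed
  thus ?thesis using RHS by simp
qed

end
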